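(* Let $\Bbbk$ be an algebraically closed field of characteristic zero and let $\mathcal{V}$ be the Virasoro algebra over $\Bbbk$. Let $M$ be a simple weight $\mathcal{V}$-module and let $\mu\in\Bbbk$ be such that $\dim M_\mu<\infty$ and $\dim M_{\mu+i}=\infty$ for every $i\in\mathbb{Z}\setminus\{0\}$. Then $\mu\notin\{-1,1\}$.
   Context: The Virasoro algebra $\mathcal{V}$ over $\Bbbk$ has basis consisting of a central element $c$ and elements $e_i$, $i\in\mathbb{Z}$, with bracket $[e_i,e_j]=(j-i)e_{i+j}+\delta_{i,-j}\frac{i^3-i}{12}c$. A weight $\mathcal{V}$-module is a module on which $e_0$ and $c$ act diagonalizably; $M_\lambda=\{m\in M: e_0m=\lambda m\}$. *)

theory Defs
  imports "HOL-Computational_Algebra.Polynomial"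
begin

definition alg_closed :: "('k::field) itself \<Rightarrow> bool" where
  "alg_closed TYPE('k) \<longleftrightarrow> (\<forall>p :: 'k poly. degree p > 0 \<longrightarrow> (\<exists>x. poly p x = 0))"

text \<open>A module over the Virasoro algebra on the vector space (UNIV :: 'm set) over 'k,
  with scalar multiplication sc. The basis element e_i acts by e i, the central element c by cc.\<close>
definition vir_module ::
  "('k::field \<Rightarrow> 'm::ab_group_add \<Rightarrow> 'm) \<Rightarrow> (int \<Rightarrow> 'm \<Rightarrow> 'm) \<Rightarrow> ('m \<Rightarrow> 'm) \<Rightarrow> bool" where
  "vir_module sc e cc \<longleftrightarrow>
     vector_space sc \<and>
     (\<forall>i. Vector_Spaces.linear sc sc (e i)) \<and> Vector_Spaces.linear sc sc cc \<and>
     (\<forall>i j v. e i (e j v) - e j (e i v) =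
        sc (of_int (j - i)) (e (i + j) v)
        + (if i = - j then sc (of_int (i^3 - i) / 12) (cc v) else 0)) \<and>
     (\<forall>i v. cc (e i v) - e i (cc v) = 0)"

definition diagonalizable :: "('k::field \<Rightarrow> 'm::ab_group_add \<Rightarrow> 'm) \<Rightarrow> ('m \<Rightarrow> 'm) \<Rightarrow> bool" where
  "diagonalizable sc f \<longleftrightarrow> module.span sc {v. \<exists>a. f v = sc a v} = UNIV"

definition weight_vir_module ::
  "('k::field \<Rightarrow> 'm::ab_group_add \<Rightarrow> 'm) \<Rightarrow> (int \<Rightarrow> 'm \<Rightarrow> 'm) \<Rightarrow> ('m \<Rightarrow> 'm) \<Rightarrow> bool" where
  "weight_vir_module sc e cc \<longleftrightarrow>
     vir_module sc e cc \<and> diagonalizable sc (e 0) \<and> diagonalizable sc cc"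

definition weight_space ::
  "('k::field \<Rightarrow> 'm::ab_group_add \<Rightarrow> 'm) \<Rightarrow> (int \<Rightarrow> 'm \<Rightarrow> 'm) \<Rightarrow> 'k \<Rightarrow> 'm set" where
  "weight_space sc e lam = {v. e 0 v = sc lam v}"

definition vir_submodule ::
  "('k::field \<Rightarrow> 'm::ab_group_add \<Rightarrow> 'm) \<Rightarrow> (int \<Rightarrow> 'm \<Rightarrow> 'm) \<Rightarrow> ('m \<Rightarrow> 'm) \<Rightarrow> 'm set \<Rightarrow> bool" where
  "vir_submodule sc e cc W \<longleftrightarrow>
     module.subspace sc W \<and> (\<forall>i. \<forall>w\<in>W. e i w \<in> W) \<and> (\<forall>w\<in>W. cc w \<in> W)"

definition simple_vir_module ::
  "('k::field \<Rightarrow> 'm::ab_group_add \<Rightarrow> 'm) \<Rightarrow> (int \<Rightarrow> 'm \<Rightarrow> 'm) \<Rightarrow> ('m \<Rightarrow> 'm) \<Rightarrow> bool" where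
  "simple_vir_module sc e cc \<longleftrightarrow>
     vir_module sc e cc \<and> (UNIV :: 'm set) \<noteq> {0} \<and>
     (\<forall>W. vir_submodule sc e cc W \<longrightarrow> W = {0} \<or> W = UNIV)"

definition fin_dim :: "('k::field \<Rightarrow> 'm::ab_group_add \<Rightarrow> 'm) \<Rightarrow> 'm set \<Rightarrow> bool" where
  "fin_dim sc W \<longleftrightarrow> (\<exists>B. finite B \<and> B \<subseteq> W \<and> module.span sc B = W)"

end

theory Submission
  imports Defs
begin

lemma lin_facts:
  assumes "Vector_Spaces.linear sc sc f"
  shows "f (a + b) = f a + f b" "f (sc r a) = sc r (f a)"
  using assms unfolding Vector_Spaces.linear_iff by auto

context vector_space
begin

lemma fin_dim_zero: "fin_dim scale {0}"
  unfolding fin_dim_def by (rule exI[of _ "{}"]) simp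

lemma ker_inf:
  assumes W: "subspace W" and nW: "\<not> fin_dim scale W"
    and f: "Vector_Spaces.linear scale scale f" and fT: "f ` W \<subseteq> T" and T: "fin_dim scale T"
  shows "\<not> fin_dim scale {v\<in>W. f v = 0}"
proof
  assume "fin_dim scale {v\<in>W. f v = 0}"
  then obtain BK where BK: "finite BK" "BK \<subseteq> {v\<in>W. f v = 0}" "span BK = {v\<in>W. f v = 0}"
    unfolding fin_dim_def by blast
  from T obtain BT where BT: "finite BT" "BT \<subseteq> T" "span BT = T"
    unfolding fin_dim_def by blast
  obtain B where B: "B \<subseteq> f ` W" "independent B" "f ` W \<subseteq> span B"
    using maximal_independent_subset by blast
  have "B \<subseteq> span BT" using B(1) fT BT(3) by blast
  then have finB: "finite B" using independent_span_bound[OF BT(1) B(2)] by blast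
  have "\<forall>b\<in>B. \<exists>w. w \<in> W \<and> f w = b" using B(1) by blast
  then obtain g where g: "\<forall>b\<in>B. g b \<in> W \<and> f (g b) = b" by metis
  define C where "C = g ` B"
  have finC: "finite C" using finB C_def by simp
  have CW: "C \<subseteq> W" using g C_def by auto
  have fC: "f ` C = B" using g C_def by (force simp: image_image)
  have mh: "module_hom scale scale f" using f by (simp add: module_hom_iff_linear)
  have spC: "span C \<subseteq> W" using span_minimal[OF CW W] .
  have "W \<subseteq> span (BK \<union> C)"
  proof
    fix w assume w: "w \<in> W"
    have "f w \<in> span B" using B(3) w by blast
    also have "span B = f ` span C" using module_hom.span_image[OF mh, of C] fC by simp
    finally obtain u where u: "u \<in> span C" "f u = f w" by (metis imageE)
    have uW: "u \<in> W" using u spC by blast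
    have "w - u \<in> {v\<in>W. f v = 0}"
      using subspace_diff[OF W w uW] module_hom.diff[OF mh, of w u] u by simp
    then have "w - u \<in> span (BK \<union> C)" using BK(3) span_mono[of BK "BK \<union> C"] by blast
    moreover have "u \<in> span (BK \<union> C)" using u span_mono[of C "BK \<union> C"] by blast
    ultimately have "(w - u) + u \<in> span (BK \<union> C)" by (rule span_add)
    then show "w \<in> span (BK \<union> C)" by simp
  qed
  moreover have "span (BK \<union> C) \<subseteq> W"
    using BK(2) CW by (intro span_minimal[OF _ W]) auto
  ultimately have "fin_dim scale W"
    unfolding fin_dim_def using BK(1,2) finC CW by (intro exI[of _ "BK \<union> C"]) auto
  with nW show False by simp
qed

lemma inf_nonzero:
  assumes "subspace W" "\<not> fin_dim scale W" shows "\<exists>v\<in>W. v \<noteq> 0"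
proof (rule ccontr)
  assume "\<not> ?thesis"
  then have "W = {0}" using subspace_0[OF assms(1)] by blast
  with fin_dim_zero assms(2) show False by simp
qed

end

inductive_set genL :: "('k::field \<Rightarrow> 'm::ab_group_add \<Rightarrow> 'm) \<Rightarrow> (int \<Rightarrow> 'm \<Rightarrow> 'm) \<Rightarrow> ('m \<Rightarrow> 'm) \<Rightarrow> 'm \<Rightarrow> 'm set"
  for sc e cc x where
  gbase: "x \<in> genL sc e cc x"
| gscl: "a \<in> genL sc e cc x \<Longrightarrow> sc r a \<in> genL sc e cc x"
| gadd: "a \<in> genL sc e cc x \<Longrightarrow> b \<in> genL sc e cc x \<Longrightarrow> a + b \<in> genL sc e cc x"
| gneg: "j \<le> 0 \<Longrightarrow> a \<in> genL sc e cc x \<Longrightarrow> e j a \<in> genL sc e cc x"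
| gcen: "a \<in> genL sc e cc x \<Longrightarrow> cc a \<in> genL sc e cc x"

fun opP :: "('k::field \<Rightarrow> 'm::ab_group_add \<Rightarrow> 'm) \<Rightarrow> ('m \<Rightarrow> 'm) \<Rightarrow> 'k \<Rightarrow> nat list \<Rightarrow> 'm \<Rightarrow> 'm" where
  "opP sc e0 lam [] v = v"
| "opP sc e0 lam (n # ns) v = e0 (opP sc e0 lam ns v) - sc (lam - of_nat n) (opP sc e0 lam ns v)"

locale virm =
  fixes sc :: "'k::field_char_0 \<Rightarrow> 'm::ab_group_add \<Rightarrow> 'm"
    and e :: "int \<Rightarrow> 'm \<Rightarrow> 'm" and cc :: "'m \<Rightarrow> 'm"
  assumes vm: "vir_module sc e cc"
begin

sublocale vs: vector_space sc using vm by (simp add: vir_module_def)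

lemma lin_e: "Vector_Spaces.linear sc sc (e i)" using vm by (simp add: vir_module_def)
lemma lin_cc: "Vector_Spaces.linear sc sc cc" using vm by (simp add: vir_module_def)

lemma e_add: "e i (a + b) = e i a + e i b" using lin_facts[OF lin_e] by blast
lemma e_scale: "e i (sc r a) = sc r (e i a)" using lin_facts[OF lin_e] by blast
lemma e_zero[simp]: "e i 0 = 0" using e_scale[of i 0 0] by simp
lemma e_diff: "e i (a - b) = e i a - e i b"
  using module_hom.diff[OF lin_e[unfolded module_hom_iff_linear[symmetric]]] by blast
lemma e_neg: "e i (- a) = - e i a"
  using module_hom.neg[OF lin_e[unfolded module_hom_iff_linear[symmetric]]] by blast
lemma cc_add: "cc (a + b) = cc a + cc b" using lin_facts[OF lin_cc] by blast
lemma cc_scale: "cc (sc r a) = sc r (cc a)" using lin_facts[OF lin_cc] by blast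
lemma cc_zero[simp]: "cc 0 = 0" using cc_scale[of 0 0] by simp
lemma cc_diff: "cc (a - b) = cc a - cc b"
  using module_hom.diff[OF lin_cc[unfolded module_hom_iff_linear[symmetric]]] by blast

lemma cc_neg: "cc (- a) = - cc a"
  using module_hom.neg[OF lin_cc[unfolded module_hom_iff_linear[symmetric]]] by blast

lemma br: "e i (e j v) - e j (e i v) = sc (of_int (j - i)) (e (i + j) v)
        + (if i = - j then sc (of_int (i^3 - i) / 12) (cc v) else 0)"
  using vm unfolding vir_module_def by blast

lemma br': "e i (e j v) = e j (e i v) + (sc (of_int (j - i)) (e (i + j) v)
        + (if i = - j then sc (of_int (i^3 - i) / 12) (cc v) else 0))"
  using br[of i j v] by (simp add: algebra_simps)

lemma br2: "i \<noteq> - j \<Longrightarrow> e i (e j v) = e j (e i v) + sc (of_int (j - i)) (e (i + j) v)"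
  using br'[of i j v] by simp

lemma cc_comm: "cc (e i v) = e i (cc v)"
  using vm unfolding vir_module_def by simp

lemma e0_comm: "e 0 (e j v) = e j (e 0 v) + sc (of_int j) (e j v)"
  using br'[of 0 j v] by simp

lemma e0_shift: "e 0 v = sc a v \<Longrightarrow> e 0 (e j v) = sc (a + of_int j) (e j v)"
  using e0_comm[of j v] by (simp add: e_scale vs.scale_left_distrib)

lemma kill_all:
  assumes "e 1 x = 0" "e 2 x = 0" shows "k > 0 \<Longrightarrow> e k x = 0"
proof -
  have "e (int n + 1) x = 0" for n :: nat
  proof (induction n rule: less_induct)
    case (less n)
    show ?case
    proof (cases "n \<le> 1")
      case True then show ?thesis using assms by (cases n) (auto simp: eval_nat_numeral)
    next
      case False
      then obtain m where m: "n = Suc m" "m \<ge> 1" by (cases n) auto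
      have IH: "e (int m + 1) x = 0" using less m by auto
      have "e 1 (e (int m + 1) x) = e (int m + 1) (e 1 x) + sc (of_int (int m + 1 - 1)) (e (1 + (int m + 1)) x)"
        by (rule br2) simp
      then have "sc (of_int (int m)) (e (int n + 1) x) = 0"
        using IH assms m by (simp add: algebra_simps)
      then show ?thesis using m by simp
    qed
  qed
  moreover assume "k > 0"
  then have "k = int (nat (k - 1)) + 1" by simp
  ultimately show "e k x = 0" by metis
qed


lemma L_zero: "0 \<in> genL sc e cc x"
proof -
  have "sc 0 x \<in> genL sc e cc x" by (rule genL.gscl[OF genL.gbase])
  then show ?thesis by simp
qed

lemma L_pos:
  assumes a: "a \<in> genL sc e cc x" and kx: "\<forall>k>0. e k x = 0"
  shows "i > 0 \<Longrightarrow> e i a \<in> genL sc e cc x"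
  using a
proof (induction arbitrary: i rule: genL.induct)
  case gbase
  then show ?case using kx L_zero by simp
next
  case (gscl a r)
  then show ?case by (simp add: e_scale genL.gscl)
next
  case (gadd a b)
  then show ?case by (simp add: e_add genL.gadd)
next
  case (gneg j a)
  have t1: "e j (e i a) \<in> genL sc e cc x" using gneg by (simp add: genL.gneg)
  have t2: "e (i + j) a \<in> genL sc e cc x"
    using gneg by (cases "i + j > 0") (auto intro: genL.gneg)
  have t3: "cc a \<in> genL sc e cc x" using gneg by (simp add: genL.gcen)
  have "e i (e j a) = e j (e i a) + (sc (of_int (j - i)) (e (i + j) a)
        + (if i = - j then sc (of_int (i^3 - i) / 12) (cc a) else 0))" by (rule br')
  moreover have "(if i = - j then sc (of_int (i^3 - i) / 12) (cc a) else 0) \<in> genL sc e cc x"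
    using t3 L_zero by (simp add: genL.gscl)
  ultimately show ?case using t1 t2 by (simp add: genL.gadd genL.gscl)
next
  case (gcen a)
  then show ?case by (simp add: cc_comm[symmetric] genL.gcen)
qed

lemma L_submod:
  assumes "\<forall>k>0. e k x = 0"
  shows "vir_submodule sc e cc (genL sc e cc x)"
  unfolding vir_submodule_def
proof (intro conjI allI ballI)
  show "vs.subspace (genL sc e cc x)"
    unfolding vs.subspace_def using L_zero by (auto intro: genL.gadd genL.gscl)
next
  fix i w assume "w \<in> genL sc e cc x"
  then show "e i w \<in> genL sc e cc x"
    using L_pos[OF _ assms] by (cases "i > 0") (auto intro: genL.gneg)
next
  fix w assume "w \<in> genL sc e cc x"
  then show "cc w \<in> genL sc e cc x" by (rule genL.gcen)
qed

abbreviation "P lam ns v \<equiv> opP sc (e 0) lam ns v"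

lemma P_add: "P lam ns (a + b) = P lam ns a + P lam ns b"
  by (induction ns) (auto simp: e_add algebra_simps)
lemma P_scale: "P lam ns (sc r a) = sc r (P lam ns a)"
  by (induction ns) (auto simp: e_scale vs.scale_right_diff_distrib vs.scale_left_commute)
lemma P_zero[simp]: "P lam ns 0 = 0"
  using P_scale[of lam ns 0 0] by simp

lemma P_append: "P lam (xs @ ys) v = P lam xs (P lam ys v)"
  by (induction xs) auto

lemma P_D: "P lam ns (e 0 v - sc a v) = e 0 (P lam ns v) - sc a (P lam ns v)"
proof (induction ns)
  case Nil then show ?case by simp
next
  case (Cons n ns)
  show ?case
    by (simp add: Cons e_diff e_add e_scale vs.scale_right_diff_distrib vs.scale_left_commute algebra_simps)
qed

lemma P_comm: "P lam xs (P lam ys v) = P lam ys (P lam xs v)"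
proof (induction xs)
  case Nil then show ?case by simp
next
  case (Cons n xs)
  show ?case by (simp add: Cons P_D)
qed

lemma P_cc: "P lam ns (cc v) = cc (P lam ns v)"
  by (induction ns) (auto simp: cc_comm cc_diff cc_scale)

lemma P_e:
  assumes "j \<le> 0"
  shows "P lam (map (\<lambda>n. n + nat (- j)) ns) (e j v) = e j (P lam ns v)"
proof (induction ns)
  case Nil then show ?case by simp
next
  case (Cons n ns)
  let ?w = "P lam ns v"
  have j: "(of_nat (nat (- j)) :: 'k) = - of_int j" using assms by simp
  have "e 0 (e j ?w) - sc (lam - of_nat (n + nat (- j))) (e j ?w)
        = e j (e 0 ?w) + (sc (of_int j) (e j ?w) - sc (lam - of_nat n + of_int j) (e j ?w))"
    by (simp add: e0_comm j algebra_simps)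
  also have "sc (of_int j) (e j ?w) - sc (lam - of_nat n + of_int j) (e j ?w) = - sc (lam - of_nat n) (e j ?w)"
    by (simp add: vs.scale_left_diff_distrib[symmetric]) (metis minus_diff_eq vs.scale_minus_left)
  finally show ?case by (simp add: Cons e_diff e_scale)
qed

lemma L_sub_Y:
  assumes x: "e 0 x = sc lam x" and a: "a \<in> genL sc e cc x"
  shows "\<exists>ns. P lam ns a = 0"
  using a
proof (induction rule: genL.induct)
  case gbase
  show ?case by (rule exI[of _ "[0]"]) (simp add: x)
next
  case (gscl a r)
  then show ?case by (auto simp: P_scale)
next
  case (gadd a b)
  then obtain ns1 ns2 where "P lam ns1 a = 0" "P lam ns2 b = 0" by blast
  then have "P lam (ns1 @ ns2) (a + b) = 0"
    by (simp add: P_append P_add) (metis P_comm P_zero)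
  then show ?case by blast
next
  case (gneg j a)
  then obtain ns where "P lam ns a = 0" by blast
  then show ?case using P_e[OF gneg(1), of lam ns a] by auto
next
  case (gcen a)
  then show ?case by (metis P_cc cc_zero)
qed

lemma P_eig: "e 0 y = sc b y \<Longrightarrow> P lam ns y = sc (prod_list (map (\<lambda>n. b - (lam - of_nat n)) ns)) y"
  by (induction ns) (auto simp: e_scale vs.scale_left_diff_distrib[symmetric] left_diff_distrib)

lemma hw:
  assumes simple: "simple_vir_module sc e cc" and x0: "x \<noteq> 0" and x: "e 0 x = sc lam x"
    and kx: "\<forall>k>0. e k x = 0" and k: "k > 0" and y: "e 0 y = sc (lam + of_nat k) y"
  shows "y = 0"
proof -
  have "genL sc e cc x = {0} \<or> genL sc e cc x = UNIV"
    using simple L_submod[OF kx] unfolding simple_vir_module_def by blast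
  then have "genL sc e cc x = UNIV" using x0 gbase by blast
  then obtain ns where "P lam ns y = 0" using L_sub_Y[OF x] by blast
  then have "sc (prod_list (map (\<lambda>n. lam + of_nat k - (lam - of_nat n)) ns)) y = 0"
    using P_eig[OF y] by simp
  moreover have "prod_list (map (\<lambda>n. lam + of_nat k - (lam - of_nat n)) ns) \<noteq> (0::'k)"
  proof -
    have "\<And>n::nat. lam + of_nat k - (lam - of_nat n) = (of_nat (k + n) :: 'k)" by simp
    then show ?thesis using k by (auto simp add: prod_list_zero_iff simp del: of_nat_add)
  qed
  ultimately show "y = 0" by simp
qed


lemma hw12:
  assumes simple: "simple_vir_module sc e cc" and x: "e 0 x = sc lam x"
    and "e 1 x = 0" "e 2 x = 0" and k: "k > 0" and y0: "y \<noteq> 0" and y: "e 0 y = sc (lam + of_nat k) y"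
  shows "x = 0"
  using hw[OF simple _ x _ k y] kill_all[OF assms(3,4)] y0 by blast

lemma lin_comp: "Vector_Spaces.linear sc sc g \<Longrightarrow> Vector_Spaces.linear sc sc (\<lambda>v. e i (g v))"
  unfolding Vector_Spaces.linear_iff by (auto simp: e_add e_scale)

lemma ws_sub: "vs.subspace (weight_space sc e a)"
  unfolding vs.subspace_def weight_space_def
  by (auto simp: e_add e_scale vs.scale_right_distrib vs.scale_left_commute)

end

definition tw :: "(int \<Rightarrow> 'm::ab_group_add \<Rightarrow> 'm) \<Rightarrow> int \<Rightarrow> 'm \<Rightarrow> 'm" where
  "tw e i v = - e (- i) v"
definition twc :: "('m::ab_group_add \<Rightarrow> 'm) \<Rightarrow> 'm \<Rightarrow> 'm" where
  "twc cc v = - cc v"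

context virm
begin

lemma tw_vir: "vir_module sc (tw e) (twc cc)"
  unfolding vir_module_def
proof (intro conjI allI)
  show "vector_space sc" using vm by (simp add: vir_module_def)
next
  fix i show "Vector_Spaces.linear sc sc (tw e i)"
    unfolding Vector_Spaces.linear_iff tw_def using vs.vector_space_axioms
    by (auto simp: e_add e_scale)
next
  show "Vector_Spaces.linear sc sc (twc cc)"
    unfolding Vector_Spaces.linear_iff twc_def using vs.vector_space_axioms
    by (auto simp: cc_add cc_scale)
next
  fix i j v
  have l: "tw e i (tw e j v) - tw e j (tw e i v) = e (-i) (e (-j) v) - e (-j) (e (-i) v)"
    by (simp add: tw_def e_neg)
  have b: "e (-i) (e (-j) v) - e (-j) (e (-i) v) = sc (of_int (- j - - i)) (e (- i + - j) v)
        + (if - i = - (- j) then sc (of_int ((-i)^3 - - i) / 12) (cc v) else 0)" by (rule br)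
  have t1: "sc (of_int (- j - - i)) (e (- i + - j) v) = sc (of_int (j - i)) (tw e (i + j) v)"
  proof -
    have "(of_int (- j - - i) :: 'k) = - of_int (j - i)" by simp
    then show ?thesis by (simp add: tw_def add.commute) (metis minus_diff_eq vs.scale_minus_left)
  qed
  have t2: "(if - i = - (- j) then sc (of_int ((-i)^3 - - i) / 12) (cc v) else 0)
     = (if i = - j then sc (of_int (i^3 - i) / 12) (twc cc v) else 0)"
  proof -
    have ii: "((-i)^3 - - i) = - (i^3 - i)" by (simp add: power3_eq_cube)
    have "(of_int ((-i)^3 - - i) / 12 :: 'k) = - (of_int (i^3 - i) / 12)"
      by (simp only: ii of_int_minus minus_divide_left)
    then show ?thesis by (auto simp: twc_def)
  qed
  show "tw e i (tw e j v) - tw e j (tw e i v) = sc (of_int (j - i)) (tw e (i + j) v) +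
          (if i = - j then sc (of_int (i ^ 3 - i) / 12) (twc cc v) else 0)"
    using l b t1 t2 by simp
next
  fix i v
  show "twc cc (tw e i v) - tw e i (twc cc v) = 0"
    by (simp add: tw_def twc_def e_neg cc_neg cc_comm)
qed

lemma tw_simple:
  assumes "simple_vir_module sc e cc" shows "simple_vir_module sc (tw e) (twc cc)"
  unfolding simple_vir_module_def
proof (intro conjI allI impI)
  show "vir_module sc (tw e) (twc cc)" by (rule tw_vir)
  show "(UNIV :: 'm set) \<noteq> {0}" using assms by (simp add: simple_vir_module_def)
next
  fix W assume W: "vir_submodule sc (tw e) (twc cc) W"
  have "vir_submodule sc e cc W"
    unfolding vir_submodule_def
  proof (intro conjI allI ballI)
    show sW: "vs.subspace W" using W by (simp add: vir_submodule_def)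
    fix i w assume w: "w \<in> W"
    have "tw e (- i) w \<in> W" using W w by (simp add: vir_submodule_def)
    then have "- e i w \<in> W" by (simp add: tw_def)
    from vs.subspace_neg[OF sW this] show "e i w \<in> W" by simp
  next
    fix w assume w: "w \<in> W"
    have sW: "vs.subspace W" using W by (simp add: vir_submodule_def)
    have "twc cc w \<in> W" using W w by (simp add: vir_submodule_def)
    from vs.subspace_neg[OF sW this] show "cc w \<in> W" by (simp add: twc_def)
  qed
  then show "W = {0} \<or> W = UNIV" using assms by (simp add: simple_vir_module_def)
qed

lemma tw_ws: "weight_space sc (tw e) a = weight_space sc e (- a)"
  unfolding weight_space_def tw_def by (auto simp: minus_equation_iff) (metis minus_minus)

lemma lw12:
  assumes simple: "simple_vir_module sc e cc" and x: "e 0 x = sc lam x"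
    and x1: "e (-1) x = 0" and x2: "e (-2) x = 0" and k: "k > 0" and y0: "y \<noteq> 0"
    and y: "e 0 y = sc (lam - of_nat k) y"
  shows "x = 0"
proof -
  interpret T: virm sc "tw e" "twc cc" by unfold_locales (rule tw_vir)
  show ?thesis
  proof (rule T.hw12[OF tw_simple[OF simple] _ _ _ k y0])
    show "tw e 0 x = sc (- lam) x" using x by (simp add: tw_def)
    show "tw e 1 x = 0" using x1 by (simp add: tw_def)
    show "tw e 2 x = 0" using x2 by (simp add: tw_def)
    show "tw e 0 y = sc (- lam + of_nat k) y" using y
      by (simp add: tw_def) (metis minus_diff_eq uminus_add_conv_diff vs.scale_minus_left)
  qed
qed


lemma ker_sub:
  assumes "vs.subspace W" "Vector_Spaces.linear sc sc f"
  shows "vs.subspace {v\<in>W. f v = 0}"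
proof -
  have f0: "f 0 = 0" using lin_facts(2)[OF assms(2), of 0 0] by simp
  show ?thesis using assms(1) f0 lin_facts[OF assms(2)]
    unfolding vs.subspace_def by auto
qed

lemma step1:
  assumes simple: "simple_vir_module sc e cc" and y0: "y \<noteq> 0" and y: "e 0 y = sc 2 y"
    and u: "e 0 u = sc 0 u" and u1: "e 1 u = 0" and u2: "e 2 (e (-1) u) = 0"
  shows "e (-1) u = 0"
proof -
  have "e 1 (e (-1) u) = e (-1) (e 1 u) + (sc (of_int (-1 - 1)) (e (1 + -1) u)
        + (if 1 = - (-1::int) then sc (of_int (1^3 - 1) / 12) (cc u) else 0))" by (rule br')
  then have w1: "e 1 (e (-1) u) = 0" using u u1 by simp
  have w0: "e 0 (e (-1) u) = sc (-1) (e (-1) u)" using e0_shift[OF u, of "-1"] by simp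
  have y': "e 0 y = sc (-1 + of_nat 3) y" using y by simp
  show ?thesis by (rule hw12[OF simple w0 w1 u2 _ y0 y']) simp
qed

lemma core:
  assumes simple: "simple_vir_module sc e cc"
    and F1: "fin_dim sc (weight_space sc e 1)"
    and I0: "\<not> fin_dim sc (weight_space sc e 0)"
    and I2: "\<not> fin_dim sc (weight_space sc e 2)"
    and Im1: "\<not> fin_dim sc (weight_space sc e (-1))"
  shows False
proof -
  have ws: "\<And>v a. v \<in> weight_space sc e a \<longleftrightarrow> e 0 v = sc a v" by (simp add: weight_space_def)
  obtain y2 where y2: "y2 \<noteq> 0" "e 0 y2 = sc 2 y2" using vs.inf_nonzero[OF ws_sub I2] ws by blast
  obtain ym where ym: "ym \<noteq> 0" "e 0 ym = sc (-1) ym" using vs.inf_nonzero[OF ws_sub Im1] ws by blast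
  define f1 where "f1 = (\<lambda>v. e 1 v)"
  define f2 where "f2 = (\<lambda>v. e 2 (e (-1) v))"
  define f3 where "f3 = (\<lambda>v. e 3 (e (-2) v))"
  define f4 where "f4 = (\<lambda>v. e 2 (e (-1) (e 2 (e (-2) v))))"
  have l1: "Vector_Spaces.linear sc sc f1" unfolding f1_def by (rule lin_e)
  have l2: "Vector_Spaces.linear sc sc f2" unfolding f2_def by (intro lin_comp lin_e)
  have l3: "Vector_Spaces.linear sc sc f3" unfolding f3_def by (intro lin_comp lin_e)
  have l4: "Vector_Spaces.linear sc sc f4" unfolding f4_def by (intro lin_comp lin_e)
  have sh: "\<And>v a j b. e 0 v = sc a v \<Longrightarrow> b = a + of_int j \<Longrightarrow> e 0 (e j v) = sc b (e j v)"
    using e0_shift by blast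
  let ?M0 = "weight_space sc e 0" and ?M1 = "weight_space sc e 1"
  have g: "e 0 (f1 v) = sc 1 (f1 v) \<and> e 0 (f2 v) = sc 1 (f2 v) \<and> e 0 (f3 v) = sc 1 (f3 v)
      \<and> e 0 (f4 v) = sc 1 (f4 v)" if v: "e 0 v = sc 0 v" for v
  proof (intro conjI)
    show "e 0 (f1 v) = sc 1 (f1 v)" unfolding f1_def by (rule sh[OF v]) simp
    have a: "e 0 (e (-1) v) = sc (-1) (e (-1) v)" by (rule sh[OF v]) simp
    show "e 0 (f2 v) = sc 1 (f2 v)" unfolding f2_def by (rule sh[OF a]) simp
    have b: "e 0 (e (-2) v) = sc (-2) (e (-2) v)" by (rule sh[OF v]) simp
    show "e 0 (f3 v) = sc 1 (f3 v)" unfolding f3_def by (rule sh[OF b]) simp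
    have c: "e 0 (e 2 (e (-2) v)) = sc 0 (e 2 (e (-2) v))" by (rule sh[OF b]) simp
    have d: "e 0 (e (-1) (e 2 (e (-2) v))) = sc (-1) (e (-1) (e 2 (e (-2) v)))" by (rule sh[OF c]) simp
    show "e 0 (f4 v) = sc 1 (f4 v)" unfolding f4_def by (rule sh[OF d]) simp
  qed
  have m1: "f1 ` ?M0 \<subseteq> ?M1" "f2 ` ?M0 \<subseteq> ?M1" "f3 ` ?M0 \<subseteq> ?M1" "f4 ` ?M0 \<subseteq> ?M1"
    using g unfolding ws by (auto simp only: image_subset_iff ws)
  define K1 where "K1 = {v\<in>?M0. f1 v = 0}"
  define K2 where "K2 = {v\<in>K1. f2 v = 0}"
  define K3 where "K3 = {v\<in>K2. f3 v = 0}"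
  define K4 where "K4 = {v\<in>K3. f4 v = 0}"
  have S1: "vs.subspace K1" unfolding K1_def by (rule ker_sub[OF ws_sub l1])
  have S2: "vs.subspace K2" unfolding K2_def by (rule ker_sub[OF S1 l2])
  have S3: "vs.subspace K3" unfolding K3_def by (rule ker_sub[OF S2 l3])
  have S4: "vs.subspace K4" unfolding K4_def by (rule ker_sub[OF S3 l4])
  have sub: "K1 \<subseteq> ?M0" "K2 \<subseteq> ?M0" "K3 \<subseteq> ?M0" "K4 \<subseteq> ?M0"
    unfolding K1_def K2_def K3_def K4_def by auto
  have N1: "\<not> fin_dim sc K1" unfolding K1_def by (rule vs.ker_inf[OF ws_sub I0 l1 m1(1) F1])
  have N2: "\<not> fin_dim sc K2" unfolding K2_def
    by (rule vs.ker_inf[OF S1 N1 l2 _ F1]) (use m1(2) sub(1) in blast)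
  have N3: "\<not> fin_dim sc K3" unfolding K3_def
    by (rule vs.ker_inf[OF S2 N2 l3 _ F1]) (use m1(3) sub(2) in blast)
  have N4: "\<not> fin_dim sc K4" unfolding K4_def
    by (rule vs.ker_inf[OF S3 N3 l4 _ F1]) (use m1(4) sub(3) in blast)
  obtain v where v: "v \<in> K4" "v \<noteq> 0" using vs.inf_nonzero[OF S4 N4] by blast
  have v0: "e 0 v = sc 0 v" using v sub(4) ws by blast
  have c1: "e 1 v = 0" and c2: "e 2 (e (-1) v) = 0" and c3: "e 3 (e (-2) v) = 0"
    and c4: "e 2 (e (-1) (e 2 (e (-2) v))) = 0"
    using v unfolding K1_def K2_def K3_def K4_def f1_def f2_def f3_def f4_def by auto
  have vm1: "e (-1) v = 0" by (rule step1[OF simple y2 v0 c1 c2])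
  define x where "x = e (-2) v"
  have x0: "e 0 x = sc (-2) x" unfolding x_def by (rule sh[OF v0]) simp
  have "e 1 (e (-2) v) = e (-2) (e 1 v) + sc (of_int (-2 - 1)) (e (1 + -2) v)" by (rule br2) simp
  then have x1: "e 1 x = 0" using c1 vm1 by (simp add: x_def)
  have x3: "e 3 x = 0" using c3 by (simp add: x_def)
  have "e 1 (e 3 x) = e 3 (e 1 x) + sc (of_int (3 - 1)) (e (1 + 3) x)" by (rule br2) simp
  then have x4: "e 4 x = 0" using x1 x3 by simp
  have "e 1 (e 4 x) = e 4 (e 1 x) + sc (of_int (4 - 1)) (e (1 + 4) x)" by (rule br2) simp
  then have x5: "e 5 x = 0" using x1 x4 by simp
  define z where "z = e 2 x"
  have "e 1 (e 2 x) = e 2 (e 1 x) + sc (of_int (2 - 1)) (e (1 + 2) x)" by (rule br2) simp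
  then have z1: "e 1 z = 0" using x1 x3 by (simp add: z_def)
  have z0: "e 0 z = sc 0 z" unfolding z_def by (rule sh[OF x0]) simp
  have zm1: "e (-1) z = 0" by (rule step1[OF simple y2 z0 z1]) (use c4 in \<open>simp add: z_def x_def\<close>)
  have "e 3 (e 2 x) = e 2 (e 3 x) + sc (of_int (2 - 3)) (e (3 + 2) x)" by (rule br2) simp
  then have z3: "e 3 z = 0" using x3 x5 by (simp add: z_def)
  have "e (-1) (e 3 z) = e 3 (e (-1) z) + sc (of_int (3 - -1)) (e (-1 + 3) z)" by (rule br2) simp
  then have z2: "e 2 z = 0" using z3 zm1 by simp
  have zz: "z = 0"
    by (rule hw12[OF simple z0 z1 z2 _ y2(1), of 2]) (use y2(2) in simp_all)
  have xx: "x = 0"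
    by (rule hw12[OF simple x0 x1 _ _ y2(1), of 4]) (use y2(2) zz z_def in simp_all)
  have "v = 0"
    by (rule lw12[OF simple v0 vm1 _ _ ym(1), of 1]) (use ym(2) xx x_def in simp_all)
  with v(2) show False by simp
qed

end

theorem lemma4:
  fixes sc :: "'k::field_char_0 \<Rightarrow> 'm::ab_group_add \<Rightarrow> 'm"
    and e :: "int \<Rightarrow> 'm \<Rightarrow> 'm" and cc :: "'m \<Rightarrow> 'm" and \<mu> :: 'k
  assumes "alg_closed TYPE('k)"
    and "weight_vir_module sc e cc"
    and "simple_vir_module sc e cc"
    and "fin_dim sc (weight_space sc e \<mu>)"
    and "\<And>i::int. i \<noteq> 0 \<Longrightarrow> \<not> fin_dim sc (weight_space sc e (\<mu> + of_int i))"
  shows "\<mu> \<noteq> -1 \<and> \<mu> \<noteq> 1"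
proof -
  interpret virm sc e cc using assms(2) by unfold_locales (simp add: weight_vir_module_def)
  interpret T: virm sc "tw e" "twc cc" by unfold_locales (rule tw_vir)
  have A: "\<mu> \<noteq> 1"
  proof
    assume m: "\<mu> = 1"
    show False
    proof (rule core[OF assms(3)])
      show "fin_dim sc (weight_space sc e 1)" using assms(4) m by simp
      show "\<not> fin_dim sc (weight_space sc e 0)" using assms(5)[of "-1"] m by simp
      show "\<not> fin_dim sc (weight_space sc e 2)" using assms(5)[of "1"] m by simp
      show "\<not> fin_dim sc (weight_space sc e (-1))" using assms(5)[of "-2"] m by simp
    qed
  qed
  have B: "\<mu> \<noteq> -1"
  proof
    assume m: "\<mu> = -1"
    show False
    proof (rule T.core[OF tw_simple[OF assms(3)]])
      show "fin_dim sc (weight_space sc (tw e) 1)" using assms(4) m by (simp add: tw_ws)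
      show "\<not> fin_dim sc (weight_space sc (tw e) 0)" using assms(5)[of "1"] m by (simp add: tw_ws)
      show "\<not> fin_dim sc (weight_space sc (tw e) 2)" using assms(5)[of "-1"] m by (simp add: tw_ws)
      show "\<not> fin_dim sc (weight_space sc (tw e) (-1))" using assms(5)[of "2"] m by (simp add: tw_ws)
    qed
  qed
  show ?thesis using A B by simp
qed

end
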